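(* Assume $F=f+h$ attains its minimum at some $x^*$, let $F^*=F(x^* )$, and consider the Regularized Composite Tensor Method $x_0\in\operatorname{dom}h$, $x_{k+1}=T_H(x_k)$, $k\ge0$, with $H=pL_p$. Assume $D=\sup_{x\in\operatorname{dom}h}\{\|x-x^*\|:F(x)\le F(x_0)\}<+\infty$. Then $$F(x_k)-F^*\le\frac{(p+1)(2p)^p}{p!}\cdot\frac{L_pD^{p+1}}{(k-1)^p},\qquad k\ge2.$$
   Context: $\mathbb{E}$ is a finite-dimensional real vector space with dual $\mathbb{E}^*$; $B:\mathbb{E}\to\mathbb{E}^*$ is a fixed self-adjoint positive-definite operator, $\|x\|=\langle Bx,x\rangle^{1/2}$, $\|g\|_*=\langle g,B^{-1}g\rangle^{1/2}$. Let $p\ge 2$ be an integer, $h:\mathbb{E}\to\mathbb{R}\cup\{+\infty\}$ proper closed convex, and $f$ convex and $p$ times differentiable on an open convex set containing $\operatorname{dom}h$, with $\|D^pf(x)-D^pf(y)\|\le L_p\|x-y\|$ for $x,y\in\operatorname{dom}h$, $0<L_p<\infty$, where for a symmetric $p$-linear form $\|A\|=\max_{\|u\|\le1}|A[u]^p|$. $F=f+h$. Taylor polynomial $\Omega_p(f,x;y)=f(x)+\sum_{k=1}^p\frac1{k!}D^kf(x)[y-x]^k$. For $x\in\operatorname{dom}h$, $T_H(x)=\arg\min_{y\in\mathbb{E}}\{\Omega_p(f,x;y)+\frac{H}{(p+1)!}\|y-x\|^{p+1}+h(y)\}$. *)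

theory Defs
  imports "HOL-Analysis.Analysis"
begin

text \<open>The operator B : E \<rightarrow> E* is represented, after identifying E* with E through the
inner product of the Euclidean type, as a linear self-adjoint positive-definite map.\<close>

definition pos_def_op :: "('a::euclidean_space \<Rightarrow> 'a) \<Rightarrow> bool" where
  "pos_def_op B \<longleftrightarrow> linear B \<and> (\<forall>x y. inner (B x) y = inner x (B y))
     \<and> (\<forall>x. x \<noteq> 0 \<longrightarrow> inner (B x) x > 0)"

definition bnorm :: "('a::euclidean_space \<Rightarrow> 'a) \<Rightarrow> 'a \<Rightarrow> real" where
  "bnorm B x = sqrt (inner (B x) x)"

definition dom_fun :: "('a \<Rightarrow> ereal) \<Rightarrow> 'a set" where
  "dom_fun h = {x. h x < \<infinity>}"

definition proper_closed_convex :: "('a::euclidean_space \<Rightarrow> ereal) \<Rightarrow> bool" where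
  "proper_closed_convex h \<longleftrightarrow>
     (\<forall>x. h x \<noteq> -\<infinity>) \<and> (\<exists>x. h x < \<infinity>)
     \<and> closed {(x, t::real). h x \<le> ereal t}
     \<and> convex {(x, t::real). h x \<le> ereal t}"

text \<open>Df k x us represents the k-linear form D^k f(x) applied to the arguments us
(a list of length k).  "p times differentiable on U" with these derivatives:\<close>

definition higher_derivs :: "nat \<Rightarrow> ('a::euclidean_space \<Rightarrow> real) \<Rightarrow>
    (nat \<Rightarrow> 'a \<Rightarrow> 'a list \<Rightarrow> real) \<Rightarrow> 'a set \<Rightarrow> bool" where
  "higher_derivs p f Df U \<longleftrightarrow>
     (\<forall>x\<in>U. Df 0 x [] = f x) \<and>
     (\<forall>k<p. \<forall>x\<in>U. \<forall>us. length us = k \<longrightarrow>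
        ((\<lambda>y. Df k y us) has_derivative (\<lambda>v. Df (Suc k) x (v # us))) (at x))"

definition taylor_poly :: "nat \<Rightarrow> ('a::euclidean_space \<Rightarrow> real) \<Rightarrow>
    (nat \<Rightarrow> 'a \<Rightarrow> 'a list \<Rightarrow> real) \<Rightarrow> 'a \<Rightarrow> 'a \<Rightarrow> real" where
  "taylor_poly p f Df x y =
     f x + (\<Sum>k = 1..p. Df k x (replicate k (y - x)) / fact k)"

definition tensor_model :: "nat \<Rightarrow> ('a::euclidean_space \<Rightarrow> 'a) \<Rightarrow> ('a \<Rightarrow> real) \<Rightarrow>
    (nat \<Rightarrow> 'a \<Rightarrow> 'a list \<Rightarrow> real) \<Rightarrow> ('a \<Rightarrow> ereal) \<Rightarrow> real \<Rightarrow> 'a \<Rightarrow> 'a \<Rightarrow> ereal" where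
  "tensor_model p B f Df h H x y =
     ereal (taylor_poly p f Df x y + H / fact (p + 1) * bnorm B (y - x) ^ (p + 1)) + h y"

definition is_tensor_step :: "nat \<Rightarrow> ('a::euclidean_space \<Rightarrow> 'a) \<Rightarrow> ('a \<Rightarrow> real) \<Rightarrow>
    (nat \<Rightarrow> 'a \<Rightarrow> 'a list \<Rightarrow> real) \<Rightarrow> ('a \<Rightarrow> ereal) \<Rightarrow> real \<Rightarrow> 'a \<Rightarrow> 'a \<Rightarrow> bool" where
  "is_tensor_step p B f Df h H x y \<longleftrightarrow>
     (\<forall>z. tensor_model p B f Df h H x y \<le> tensor_model p B f Df h H x z)"

end

theory Submission
  imports Defs
begin


lemma bnorm_nonneg:
  assumes "pos_def_op B" shows "0 \<le> bnorm B v"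
proof -
  have "0 \<le> inner (B v) v"
  proof (cases "v = 0")
    case True
    have "linear B" using assms by (simp add: pos_def_op_def)
    then have "B 0 = 0" by (simp add: linear_0)
    then show ?thesis using True by simp
  next
    case False then show ?thesis using assms unfolding pos_def_op_def by (meson less_imp_le)
  qed
  then show ?thesis by (simp add: bnorm_def)
qed

lemma bnorm_scale:
  assumes "pos_def_op B" shows "bnorm B (c *\<^sub>R v) = \<bar>c\<bar> * bnorm B v"
proof -
  have "linear B" using assms by (simp add: pos_def_op_def)
  then have "B (c *\<^sub>R v) = c *\<^sub>R B v" by (simp add: linear_scale)
  then have "inner (B (c *\<^sub>R v)) (c *\<^sub>R v) = c^2 * inner (B v) v"
    by (simp add: power2_eq_square)
  then show ?thesis by (simp add: bnorm_def real_sqrt_mult)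
qed

lemma bnorm_minus:
  assumes "pos_def_op B" shows "bnorm B (a - b) = bnorm B (b - a)"
  using bnorm_scale[OF assms, of "-1" "b - a"] by simp

lemma deriv_homog:
  assumes fd: "higher_derivs p f Df U" and U: "open U"
  shows "k \<le> p \<Longrightarrow> z \<in> U \<Longrightarrow> Df k z (replicate k (c *\<^sub>R v)) = c^k * Df k z (replicate k v)"
proof (induction k arbitrary: z)
  case 0
  then show ?case by simp
next
  case (Suc k)
  have kp: "k < p" using Suc by simp
  have d1: "((\<lambda>y. Df k y (replicate k (c *\<^sub>R v))) has_derivative
       (\<lambda>w. Df (Suc k) z (w # replicate k (c *\<^sub>R v)))) (at z)"
    using fd Suc.prems kp unfolding higher_derivs_def by auto
  have d2: "((\<lambda>y. Df k y (replicate k v)) has_derivative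
       (\<lambda>w. Df (Suc k) z (w # replicate k v))) (at z)"
    using fd Suc.prems kp unfolding higher_derivs_def by auto
  have d2': "((\<lambda>y. c^k * Df k y (replicate k v)) has_derivative
       (\<lambda>w. c^k * Df (Suc k) z (w # replicate k v))) (at z)"
    by (rule has_derivative_mult_right[OF d2])
  have d1': "((\<lambda>y. c^k * Df k y (replicate k v)) has_derivative
       (\<lambda>w. Df (Suc k) z (w # replicate k (c *\<^sub>R v)))) (at z)"
  proof (rule has_derivative_transform_within_open[OF d1 U Suc.prems(2)])
    fix y assume "y \<in> U"
    then show "Df k y (replicate k (c *\<^sub>R v)) = c^k * Df k y (replicate k v)"
      using Suc.IH kp by simp
  qed
  have eq: "(\<lambda>w. Df (Suc k) z (w # replicate k (c *\<^sub>R v))) = (\<lambda>w. c^k * Df (Suc k) z (w # replicate k v))"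
    by (rule has_derivative_unique[OF d1' d2'])
  have lin: "linear (\<lambda>w. Df (Suc k) z (w # replicate k v))"
    using has_derivative_linear[OF d2] .
  have "Df (Suc k) z (replicate (Suc k) (c *\<^sub>R v)) = c^k * Df (Suc k) z ((c *\<^sub>R v) # replicate k v)"
    using fun_cong[OF eq, of "c *\<^sub>R v"] by simp
  also have "\<dots> = c^k * (c * Df (Suc k) z (v # replicate k v))"
    using linear_scale[OF lin, of c v] by simp
  finally show ?case by simp
qed

lemma h_convex:
  assumes h: "proper_closed_convex h" and a: "a \<in> dom_fun h" and b: "b \<in> dom_fun h"
    and t: "0 \<le> t" "t \<le> 1"
  shows "h ((1 - t) *\<^sub>R a + t *\<^sub>R b) \<le> ereal ((1 - t) * real_of_ereal (h a) + t * real_of_ereal (h b))"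
proof -
  have fa: "h a = ereal (real_of_ereal (h a))"
  proof -
    have "h a \<noteq> - \<infinity>" using h unfolding proper_closed_convex_def by blast
    moreover have "h a \<noteq> \<infinity>" using a unfolding dom_fun_def by auto
    ultimately show ?thesis by (cases "h a") auto
  qed
  have fb: "h b = ereal (real_of_ereal (h b))"
  proof -
    have "h b \<noteq> - \<infinity>" using h unfolding proper_closed_convex_def by blast
    moreover have "h b \<noteq> \<infinity>" using b unfolding dom_fun_def by auto
    ultimately show ?thesis by (cases "h b") auto
  qed
  let ?E = "{(x, t::real). h x \<le> ereal t}"
  have cE: "convex ?E" using h by (simp add: proper_closed_convex_def)
  have m1: "(a, real_of_ereal (h a)) \<in> ?E" using fa by simp
  have m2: "(b, real_of_ereal (h b)) \<in> ?E" using fb by simp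
  have "(1 - t) *\<^sub>R (a, real_of_ereal (h a)) + t *\<^sub>R (b, real_of_ereal (h b)) \<in> ?E"
    by (rule convexD[OF cE m1 m2]) (use t in auto)
  then show ?thesis by simp
qed

lemma dom_convex:
  assumes h: "proper_closed_convex h" shows "convex (dom_fun h)"
proof (rule convexI)
  fix a b and u v :: real
  assume a: "a \<in> dom_fun h" and b: "b \<in> dom_fun h" and uv: "0 \<le> u" "0 \<le> v" "u + v = 1"
  then have "u = 1 - v" by simp
  then have "h (u *\<^sub>R a + v *\<^sub>R b) \<le> ereal ((1 - v) * real_of_ereal (h a) + v * real_of_ereal (h b))"
    using h_convex[OF h a b, of v] uv \<open>u = 1 - v\<close> by simp
  then have "h (u *\<^sub>R a + v *\<^sub>R b) < \<infinity>" by (rule le_less_trans) simp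
  then show "u *\<^sub>R a + v *\<^sub>R b \<in> dom_fun h" by (simp add: dom_fun_def)
qed




lemma dpow: "((\<lambda>s. - ((1 - s)^(n+1) / (real n + 1))) has_real_derivative (1 - s)^n) (at s within S)"
proof -
  have "((\<lambda>s. (1 - s)^(n+1)) has_real_derivative (real (n+1) * (1 - s)^n * (0 - 1))) (at s within S)"
    by (rule derivative_eq_intros refl)+ simp
  then have "((\<lambda>s. - ((1 - s)^(n+1) / (real n + 1))) has_real_derivative - ((real (n+1) * (1 - s)^n * (0 - 1)) / (real n + 1))) (at s within S)"
    by (intro DERIV_minus DERIV_cdivide)
  moreover have "- ((real (n+1) * (1 - s)^n * (0 - 1)) / (real n + 1)) = (1 - s)^n"
    by (simp add: add.commute)
  ultimately show ?thesis by simp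
qed

lemma int_pow: "((\<lambda>s::real. (1 - s)^n) has_integral (1 / (real n + 1))) {0..1}"
proof -
  define A where "A s = - ((1 - s)^(n+1) / (real n + 1))" for s :: real
  have "((\<lambda>s::real. (1 - s)^n) has_integral (A 1 - A 0)) {0..1}"
  proof (rule fundamental_theorem_of_calculus)
    fix s :: real assume "s \<in> {0..1}"
    show "(A has_vector_derivative (1 - s)^n) (at s within {0..1})"
      unfolding A_def has_real_derivative_iff_has_vector_derivative[symmetric] by (rule dpow)
  qed simp
  then show ?thesis by (simp add: A_def)
qed

lemma taylor_bound:
  fixes B :: "'a::euclidean_space \<Rightarrow> 'a"
    and f :: "'a \<Rightarrow> real" and Df :: "nat \<Rightarrow> 'a \<Rightarrow> 'a list \<Rightarrow> real"
    and h :: "'a \<Rightarrow> ereal"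
  assumes B: "pos_def_op B"
    and p: "p \<ge> 1"
    and h: "proper_closed_convex h"
    and U: "open U" "dom_fun h \<subseteq> U"
    and fdiff: "higher_derivs p f Df U"
    and Lip: "\<forall>y\<in>dom_fun h. \<forall>z\<in>dom_fun h. \<forall>u. bnorm B u \<le> 1 \<longrightarrow>
              \<bar>Df p y (replicate p u) - Df p z (replicate p u)\<bar> \<le> L * bnorm B (y - z)"
    and x: "x \<in> dom_fun h" and y: "y \<in> dom_fun h"
  shows "\<bar>f y - taylor_poly p f Df x y\<bar> \<le> L / fact (p + 1) * bnorm B (y - x) ^ (p + 1)"
proof -
  define v where "v = y - x"
  define g where "g m s = Df m (x + s *\<^sub>R v) (replicate m v)" for m s
  define n where "n = bnorm B v"
  define K where "K = L * n ^ (p + 1)"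
  have n0: "0 \<le> n" using bnorm_nonneg[OF B] n_def by simp
  have cvx: "convex (dom_fun h)" by (rule dom_convex[OF h])
  have seg: "x + s *\<^sub>R v \<in> dom_fun h" if "0 \<le> s" "s \<le> 1" for s
  proof -
    have "x + s *\<^sub>R v = (1 - s) *\<^sub>R x + s *\<^sub>R y" by (simp add: v_def algebra_simps)
    then show ?thesis using convexD_alt[OF cvx x y, of s] that by simp
  qed
  have der: "(g m has_vector_derivative g (Suc m) s) (at s within {0..1})"
    if m: "m < p" and s: "0 \<le> s" "s \<le> 1" for m s
  proof -
    define z where "z = x + s *\<^sub>R v"
    have zU: "z \<in> U" using seg[OF s] U z_def by auto
    have d1: "((\<lambda>w. Df m w (replicate m v)) has_derivative
       (\<lambda>w. Df (Suc m) z (w # replicate m v))) (at z)"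
      using fdiff zU m unfolding higher_derivs_def by auto
    have d0: "((\<lambda>s. x + s *\<^sub>R v) has_derivative (\<lambda>t. t *\<^sub>R v)) (at s within {0..1})"
      by (rule derivative_eq_intros refl)+ simp
    have dc: "((\<lambda>s. Df m (x + s *\<^sub>R v) (replicate m v)) has_derivative
        (\<lambda>t. Df (Suc m) z ((t *\<^sub>R v) # replicate m v))) (at s within {0..1})"
      using has_derivative_compose[OF d0, of "\<lambda>w. Df m w (replicate m v)"] d1 z_def by simp
    have lin: "linear (\<lambda>w. Df (Suc m) z (w # replicate m v))"
      using has_derivative_linear[OF d1] .
    have "(\<lambda>t. Df (Suc m) z ((t *\<^sub>R v) # replicate m v)) = (\<lambda>t. t *\<^sub>R g (Suc m) s)"
      using linear_scale[OF lin] by (auto simp: g_def z_def)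
    then show ?thesis using dc unfolding has_vector_derivative_def g_def by simp
  qed
  define i where "i = (\<lambda>s. ((1 - s) ^ (p - 1) / fact (p - 1)) *\<^sub>R g p s)"
  have p0: "p > 0" using p by simp
  have TI: "(i has_integral (g 0 1 - (\<Sum>i<p. ((1 - 0) ^ i / fact i) *\<^sub>R g i 0))) {0..1}"
    unfolding i_def
    by (rule Taylor_has_integral[OF p0 refl]) (use der in auto)
  have g01: "g 0 1 = f y"
  proof -
    have "y \<in> U" using y U by auto
    then show ?thesis using fdiff unfolding higher_derivs_def g_def v_def by simp
  qed
  have gi0: "g k 0 = Df k x (replicate k (y - x))" for k by (simp add: g_def v_def)
  have fx: "f x = g 0 0"
  proof -
    have "x \<in> U" using x U by auto
    then show ?thesis using fdiff unfolding higher_derivs_def g_def by simp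
  qed
  have tp: "taylor_poly p f Df x y = (\<Sum>k<p. g k 0 / fact k) + g p 0 / fact p"
  proof -
    have "(\<Sum>k<Suc p. g k 0 / fact k) = g 0 0 + (\<Sum>k=1..p. g k 0 / fact k)"
      by (simp add: sum.atLeast1_atMost_eq lessThan_Suc_eq_insert_0 sum.reindex)
    then show ?thesis unfolding taylor_poly_def using fx gi0 by simp
  qed
  have gbound: "\<bar>g p s - g p 0\<bar> \<le> K * s" if s: "0 \<le> s" "s \<le> 1" for s
  proof -
    have z: "x + s *\<^sub>R v \<in> dom_fun h" using seg[OF s] .
    have bn: "bnorm B (x + s *\<^sub>R v - x) = s * n" using bnorm_scale[OF B, of s v] s n_def by simp
    show ?thesis
    proof (cases "n = 0")
      case True
      have "bnorm B v \<le> 1" using True n_def by simp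
      then have "\<bar>g p s - g p 0\<bar> \<le> L * bnorm B (x + s *\<^sub>R v - x)"
        using Lip[rule_format, OF z x, of v] unfolding g_def by simp
      then show ?thesis using bn True K_def p by simp
    next
      case False
      then have npos: "n > 0" using n0 by simp
      define u where "u = (1 / n) *\<^sub>R v"
      have vu: "v = n *\<^sub>R u" using npos u_def by simp
      have bu: "bnorm B u = 1" using bnorm_scale[OF B, of "1/n" v] npos u_def n_def by simp
      have "\<bar>Df p (x + s *\<^sub>R v) (replicate p u) - Df p x (replicate p u)\<bar> \<le> L * (s * n)"
        using Lip[rule_format, OF z x, of u] bu bn by simp
      moreover have "g p s = n ^ p * Df p (x + s *\<^sub>R v) (replicate p u)"
        unfolding g_def using deriv_homog[OF fdiff U(1), of p "x + s *\<^sub>R v" n u] z U vu by auto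
      moreover have "g p 0 = n ^ p * Df p x (replicate p u)"
        unfolding g_def using deriv_homog[OF fdiff U(1), of p x n u] x U vu by auto
      ultimately have "\<bar>g p s - g p 0\<bar> \<le> n ^ p * (L * (s * n))"
        using npos by (simp add: right_diff_distrib[symmetric] abs_mult mult_left_mono)
      then show ?thesis by (simp add: K_def algebra_simps)
    qed
  qed
  obtain q where q: "p = Suc q" using p0 gr0_implies_Suc by blast
  define w where "w s = (1 - s) ^ q / fact q" for s :: real
  have w0: "0 \<le> w s" if "s \<le> 1" for s using that by (simp add: w_def)
  have I1: "(w has_integral (1 / fact p)) {0..1}"
    using has_integral_divide[OF int_pow[of q], of "fact q"] q unfolding w_def[abs_def] by (simp add: add.commute)
  have I2: "((\<lambda>s. w s * s) has_integral (1 / fact (p + 1))) {0..1}"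
  proof -
    have e: "w s * s = (1 - s) ^ q / fact q - (1 - s) ^ Suc q / fact q" for s
      by (simp add: w_def field_simps)
    have "((\<lambda>s. (1 - s) ^ q / fact q - (1 - s) ^ Suc q / fact q) has_integral
           (1 / (real q + 1) / fact q - 1 / (real (Suc q) + 1) / fact q)) {0..1}"
      by (intro has_integral_diff has_integral_divide int_pow)
    moreover have "1 / (real q + 1) / fact q - 1 / (real (Suc q) + 1) / fact q = 1 / fact (p + 1)"
    proof -
      have fq: "fact q > (0::real)" by simp
      have a1: "real q + 1 > 0" "real q + 2 > 0" by auto
      have e1: "1 / (real q + 1) - 1 / (real q + 2) = 1 / ((real q + 2) * (real q + 1))"
        using a1 by (simp add: field_simps)
      have "1 / (real q + 1) / fact q - 1 / (real (Suc q) + 1) / fact q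
          = (1 / (real q + 1) - 1 / (real q + 2)) / fact q"
        by (simp add: diff_divide_distrib add.commute)
      also have "\<dots> = 1 / ((real q + 2) * (real q + 1) * fact q)" using e1 by simp
      finally have "1 / (real q + 1) / fact q - 1 / (real (Suc q) + 1) / fact q = 1 / ((real q + 2) * (real q + 1) * fact q)" .
      moreover have "(fact (p + 1) :: real) = (real q + 2) * (real q + 1) * fact q"
        by (simp add: q algebra_simps)
      ultimately show ?thesis by simp
    qed
    ultimately show ?thesis using e by simp
  qed
  have Iu: "((\<lambda>s. w s * g p 0 + K * (w s * s)) has_integral (g p 0 / fact p + K / fact (p + 1))) {0..1}"
    using has_integral_add[OF has_integral_mult_left[OF I1, of "g p 0"] has_integral_mult_right[OF I2, of K]]
    by simp
  have Il: "((\<lambda>s. w s * g p 0 - K * (w s * s)) has_integral (g p 0 / fact p - K / fact (p + 1))) {0..1}"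
    using has_integral_diff[OF has_integral_mult_left[OF I1, of "g p 0"] has_integral_mult_right[OF I2, of K]]
    by simp
  have iw: "i s = w s * g p s" for s by (simp add: i_def w_def q)
  have up: "g 0 1 - (\<Sum>i<p. ((1 - 0) ^ i / fact i) *\<^sub>R g i 0) \<le> g p 0 / fact p + K / fact (p + 1)"
  proof (rule has_integral_le[OF TI Iu])
    fix s :: real assume "s \<in> {0..1}"
    then have s: "0 \<le> s" "s \<le> 1" by auto
    have "w s * g p s \<le> w s * (g p 0 + K * s)"
      using gbound[OF s] w0[OF s(2)] by (intro mult_left_mono) auto
    then show "i s \<le> w s * g p 0 + K * (w s * s)" using iw by (simp add: algebra_simps)
  qed
  have lo: "g p 0 / fact p - K / fact (p + 1) \<le> g 0 1 - (\<Sum>i<p. ((1 - 0) ^ i / fact i) *\<^sub>R g i 0)"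
  proof (rule has_integral_le[OF Il TI])
    fix s :: real assume "s \<in> {0..1}"
    then have s: "0 \<le> s" "s \<le> 1" by auto
    have "w s * (g p 0 - K * s) \<le> w s * g p s"
      using gbound[OF s] w0[OF s(2)] by (intro mult_left_mono) auto
    then show "w s * g p 0 - K * (w s * s) \<le> i s" using iw by (simp add: algebra_simps)
  qed
  have "\<bar>f y - taylor_poly p f Df x y\<bar> \<le> K / fact (p + 1)"
    using up lo g01 tp by (simp add: abs_le_iff)
  then show ?thesis by (simp add: K_def n_def v_def)
qed




lemma rate_step:
  fixes k P C :: real and n :: nat
  assumes P: "P = real n" "n \<ge> 1" and C: "C \<ge> 0" and k: "k > 2 * P"
  shows "(1 - 2 * P / k) * ((P + 1) * (2 * P) ^ n * C / (k - 1) ^ n) + C * (2 * P / k) ^ (n + 1)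
         \<le> (P + 1) * (2 * P) ^ n * C / k ^ n"
proof -
  define a where "a = (k - 1) ^ n"
  define b where "b = k ^ n"
  define Q where "Q = (2 * P) ^ n * C"
  have P1: "P \<ge> 1" using P by simp
  have k1: "k > 1" using k P1 by simp
  have apos: "a > 0" using k1 by (simp add: a_def)
  have bpos: "b > 0" using k1 by (simp add: b_def)
  have Q0: "Q \<ge> 0" using C P1 by (simp add: Q_def)
  have bern: "1 + real n * (- 1 / k) \<le> (1 + (- 1 / k)) ^ n"
    by (rule Bernoulli_inequality) (use k1 in simp)
  have "(1 + (- 1 / k)) ^ n = a / b" using k1 by (simp add: a_def b_def power_divide field_simps)
  with bern have "1 - P / k \<le> a / b" using P by simp
  then have ka: "(k - P) * b \<le> k * a" using bpos k1 by (simp add: field_simps)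
  have pos2: "(P + 1) * k - 2 * P > 0" proof -
    have "P * k \<ge> 0" using P1 k1 by simp
    then show ?thesis using k by (simp add: algebra_simps)
  qed
  have "k * (a * ((P + 1) * k - 2 * P) - (k - 2 * P) * (P + 1) * b)
        = (k * a) * ((P + 1) * k - 2 * P) - k * (k - 2 * P) * (P + 1) * b" by (simp add: algebra_simps)
  also have "\<dots> \<ge> (k - P) * b * ((P + 1) * k - 2 * P) - k * (k - 2 * P) * (P + 1) * b"
    using mult_right_mono[OF ka, of "(P + 1) * k - 2 * P"] pos2 by simp
  finally have "k * (a * ((P + 1) * k - 2 * P) - (k - 2 * P) * (P + 1) * b)
      \<ge> b * (P * k * (P - 1) + 2 * P * P)" by (simp add: algebra_simps)
  moreover have "b * (P * k * (P - 1) + 2 * P * P) \<ge> 0" using bpos P1 k1 by simp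
  ultimately have "0 \<le> k * (a * ((P + 1) * k - 2 * P) - (k - 2 * P) * (P + 1) * b)"
    by linarith
  then have br: "a * ((P + 1) * k - 2 * P) - (k - 2 * P) * (P + 1) * b \<ge> 0"
    using k1 by (simp add: zero_le_mult_iff)
  have e1: "C * (2 * P / k) ^ (n + 1) = Q * (2 * P) / (k * b)"
    by (simp add: Q_def b_def power_divide ac_simps)
  have e2: "(1 - 2 * P / k) * ((P + 1) * (2 * P) ^ n * C / (k - 1) ^ n) = (k - 2 * P) * (P + 1) * Q * b / (k * a * b)"
  proof -
    have "(1 - 2 * P / k) = (k - 2 * P) / k" using k1 by (simp add: diff_divide_distrib)
    moreover have "(P + 1) * (2 * P) ^ n * C / (k - 1) ^ n = (P + 1) * Q / a" by (simp add: a_def Q_def)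
    ultimately have "(1 - 2 * P / k) * ((P + 1) * (2 * P) ^ n * C / (k - 1) ^ n) = ((k - 2 * P) * (P + 1) * Q) / (k * a)"
      by simp
    also have "\<dots> = ((k - 2 * P) * (P + 1) * Q * b) / (k * a * b)" using bpos by simp
    finally show ?thesis .
  qed
  have e3: "Q * (2 * P) / (k * b) = 2 * P * Q * a / (k * a * b)" using apos by (simp add: ac_simps)
  have lhs: "(1 - 2 * P / k) * ((P + 1) * (2 * P) ^ n * C / (k - 1) ^ n) + C * (2 * P / k) ^ (n + 1)
      = ((k - 2 * P) * (P + 1) * Q * b + 2 * P * Q * a) / (k * a * b)"
    unfolding e1 e2 e3 by (simp add: add_divide_distrib)
  have rhs: "(P + 1) * (2 * P) ^ n * C / k ^ n = ((P + 1) * Q * k * a) / (k * a * b)"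
  proof -
    have "((P + 1) * Q * k * a) / (k * a * b) = ((P + 1) * Q) / b" using k1 apos by simp
    then show ?thesis by (simp add: Q_def b_def)
  qed
  have ineq: "(k - 2 * P) * (P + 1) * Q * b + 2 * P * Q * a \<le> (P + 1) * Q * k * a"
  proof -
    have "Q * (a * ((P + 1) * k - 2 * P) - (k - 2 * P) * (P + 1) * b) \<ge> 0"
      by (rule mult_nonneg_nonneg[OF Q0 br])
    then show ?thesis by (simp add: algebra_simps)
  qed
  have kab: "k * a * b > 0" using k1 apos bpos by simp
  have fin: "((k - 2 * P) * (P + 1) * Q * b + 2 * P * Q * a) / (k * a * b) \<le> ((P + 1) * Q * k * a) / (k * a * b)"
    by (rule divide_right_mono[OF ineq]) (use kab in linarith)
  show ?thesis unfolding lhs rhs by (rule fin)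
qed




lemma rate:
  fixes \<delta> :: "nat \<Rightarrow> real" and C :: real and p :: nat
  assumes p: "p \<ge> 1" and C: "C \<ge> 0"
    and rec: "\<And>k t. 0 \<le> t \<Longrightarrow> t \<le> 1 \<Longrightarrow> \<delta> (Suc k) \<le> (1 - t) * \<delta> k + C * t ^ (p + 1)"
  shows "k \<ge> 2 \<Longrightarrow> \<delta> k \<le> (real p + 1) * (2 * real p) ^ p * C / (real k - 1) ^ p"
proof (induction k rule: nat_induct_at_least)
  case base
  have "\<delta> 2 \<le> C" using rec[of 1 1] by (simp add: numeral_2_eq_2)
  moreover have "C \<le> (real p + 1) * (2 * real p) ^ p * C"
  proof -
    have "1 \<le> 2 * real p" using p by simp
    then have "1 \<le> (2 * real p) ^ p" by (rule one_le_power)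
    moreover have "1 \<le> real p + 1" by simp
    ultimately have "1 \<le> (real p + 1) * (2 * real p) ^ p"
      using mult_mono[of 1 "real p + 1" 1 "(2*real p)^p"] by simp
    then have "1 * C \<le> ((real p + 1) * (2 * real p) ^ p) * C" by (rule mult_right_mono[OF _ C])
    then show ?thesis by simp
  qed
  ultimately show ?case by simp
next
  case (Suc m)
  have m2: "m \<ge> 2" using Suc by simp
  have mr: "real (Suc m) - 1 = real m" by simp
  show ?case
  proof (cases "real m \<le> 2 * real p")
    case True
    have "\<delta> (Suc m) \<le> C" using rec[of 1 m] by simp
    moreover have "C \<le> (real p + 1) * (2 * real p) ^ p * C / real m ^ p"
    proof -
      have "real m ^ p \<le> (2 * real p) ^ p" using True by (intro power_mono) auto
      also have "\<dots> \<le> (real p + 1) * (2 * real p) ^ p"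
        using mult_right_mono[of 1 "real p + 1" "(2*real p)^p"] by simp
      finally have "real m ^ p \<le> (real p + 1) * (2 * real p) ^ p" .
      then have "C * real m ^ p \<le> C * ((real p + 1) * (2 * real p) ^ p)"
        by (rule mult_left_mono[OF _ C])
      then have "C * real m ^ p \<le> (real p + 1) * (2 * real p) ^ p * C"
        by (simp only: ac_simps)
      moreover have "real m ^ p > 0" using m2 by simp
      ultimately show ?thesis by (simp add: pos_le_divide_eq)
    qed
    ultimately show ?thesis using mr by simp
  next
    case False
    define t where "t = 2 * real p / real m"
    have mgt: "real m > 2 * real p" using False by simp
    have mpos: "real m > 0" using m2 by simp
    have t0: "0 \<le> t" by (simp add: t_def)
    have t1: "t \<le> 1" unfolding t_def using mgt mpos by (simp add: divide_le_eq)
    have IH: "\<delta> m \<le> (real p + 1) * (2 * real p) ^ p * C / (real m - 1) ^ p" by (rule Suc.IH)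
    have "\<delta> (Suc m) \<le> (1 - t) * \<delta> m + C * t ^ (p + 1)" using rec[OF t0 t1] .
    also have "\<dots> \<le> (1 - t) * ((real p + 1) * (2 * real p) ^ p * C / (real m - 1) ^ p) + C * t ^ (p + 1)"
    proof -
      have "(1 - t) * \<delta> m \<le> (1 - t) * ((real p + 1) * (2 * real p) ^ p * C / (real m - 1) ^ p)"
        using t1 by (intro mult_left_mono[OF IH]) simp
      then show ?thesis by (rule add_right_mono)
    qed
    also have "\<dots> \<le> (real p + 1) * (2 * real p) ^ p * C / real m ^ p"
      unfolding t_def by (rule rate_step[OF refl p C mgt])
    finally show ?thesis using mr by simp
  qed
qed




theorem theorem3:
  fixes B :: "'a::euclidean_space \<Rightarrow> 'a"
    and f :: "'a \<Rightarrow> real" and Df :: "nat \<Rightarrow> 'a \<Rightarrow> 'a list \<Rightarrow> real"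
    and h :: "'a \<Rightarrow> ereal" and U :: "'a set"
    and p :: nat and L :: real and xs :: 'a and x :: "nat \<Rightarrow> 'a"
  assumes B: "pos_def_op B"
    and p: "p \<ge> 2"
    and h: "proper_closed_convex h"
    and U: "open U" "convex U" "dom_fun h \<subseteq> U"
    and fconv: "convex_on U f"
    and fdiff: "higher_derivs p f Df U"
    and Lpos: "0 < L"
    and Lip: "\<forall>y\<in>dom_fun h. \<forall>z\<in>dom_fun h. \<forall>u. bnorm B u \<le> 1 \<longrightarrow>
              \<bar>Df p y (replicate p u) - Df p z (replicate p u)\<bar> \<le> L * bnorm B (y - z)"
    and xs: "\<forall>y. ereal (f xs) + h xs \<le> ereal (f y) + h y"
    and x0: "x 0 \<in> dom_fun h"
    and iter: "\<forall>k. is_tensor_step p B f Df h (real p * L) (x k) (x (Suc k))"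
    and Dbdd: "bdd_above ((\<lambda>y. bnorm B (y - xs)) `
                 {y \<in> dom_fun h. ereal (f y) + h y \<le> ereal (f (x 0)) + h (x 0)})"
  shows "\<forall>k\<ge>2. ereal (f (x k)) + h (x k) - (ereal (f xs) + h xs) \<le>
           ereal ((real p + 1) * (2 * real p) ^ p / fact p *
             (L * (SUP y\<in>{y \<in> dom_fun h. ereal (f y) + h y \<le> ereal (f (x 0)) + h (x 0)}.
                     bnorm B (y - xs)) ^ (p + 1) / (real k - 1) ^ p))"
proof -
  have p1: "p \<ge> 1" using p by simp
  define hr where "hr y = real_of_ereal (h y)" for y
  define Fr where "Fr y = f y + hr y" for y
  have hfin: "h y = ereal (hr y)" if "y \<in> dom_fun h" for y
  proof -
    have "h y \<noteq> - \<infinity>" using h unfolding proper_closed_convex_def by blast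
    moreover have "h y \<noteq> \<infinity>" using that unfolding dom_fun_def by auto
    ultimately show ?thesis unfolding hr_def by (cases "h y") auto
  qed
  have Feq: "ereal (f y) + h y = ereal (Fr y)" if "y \<in> dom_fun h" for y
    using hfin[OF that] by (simp add: Fr_def)
  have xsd: "xs \<in> dom_fun h"
  proof -
    have le: "ereal (f xs) + h xs \<le> ereal (Fr (x 0))" using xs Feq[OF x0] by metis
    show ?thesis
    proof (rule ccontr)
      assume "xs \<notin> dom_fun h"
      then have "h xs = \<infinity>" unfolding dom_fun_def by simp
      then show False using le by simp
    qed
  qed
  have bn0: "bnorm B 0 = 0" using bnorm_scale[OF B, of 0 0] by simp
  have KS: "x (Suc k) \<in> dom_fun h \<and> (\<forall>y\<in>dom_fun h. Fr (x (Suc k)) \<le> Fr y + L / fact p * bnorm B (y - x k) ^ (p + 1))"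
    if xk: "x k \<in> dom_fun h" for k
  proof -
    define T where "T = x (Suc k)"
    define A where "A z = taylor_poly p f Df (x k) z + real p * L / fact (p + 1) * bnorm B (z - x k) ^ (p + 1)" for z
    have mod: "tensor_model p B f Df h (real p * L) (x k) z = ereal (A z) + h z" for z
      by (simp add: tensor_model_def A_def)
    have mT: "ereal (A T) + h T \<le> ereal (A z) + h z" for z
      using iter mod unfolding is_tensor_step_def T_def by metis
    have Td: "T \<in> dom_fun h"
    proof (rule ccontr)
      assume "T \<notin> dom_fun h"
      then have "h T = \<infinity>" unfolding dom_fun_def by simp
      then show False using mT[of "x k"] hfin[OF xk] by simp
    qed
    have main: "Fr T \<le> Fr y + L / fact p * bnorm B (y - x k) ^ (p + 1)" if yd: "y \<in> dom_fun h" for y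
    proof -
      have "ereal (A T + hr T) \<le> ereal (A y + hr y)"
        using mT[of y] hfin[OF Td] hfin[OF yd] by simp
      then have Ale: "A T + hr T \<le> A y + hr y" by simp
      have t1: "\<bar>f T - taylor_poly p f Df (x k) T\<bar> \<le> L / fact (p + 1) * bnorm B (T - x k) ^ (p + 1)"
        by (rule taylor_bound[OF B p1 h U(1) U(3) fdiff Lip xk Td])
      have t2: "\<bar>f y - taylor_poly p f Df (x k) y\<bar> \<le> L / fact (p + 1) * bnorm B (y - x k) ^ (p + 1)"
        by (rule taylor_bound[OF B p1 h U(1) U(3) fdiff Lip xk yd])
      define nT where "nT = bnorm B (T - x k) ^ (p + 1)"
      define ny where "ny = bnorm B (y - x k) ^ (p + 1)"
      have nT0: "0 \<le> nT" unfolding nT_def using bnorm_nonneg[OF B] by simp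
      have fp: "(fact (p + 1) :: real) = (real p + 1) * fact p" by (simp add: algebra_simps)
      have fpos: "(fact p :: real) > 0" by simp
      have c1: "L / fact (p + 1) * nT \<le> real p * L / fact (p + 1) * nT"
      proof -
        have "L / fact (p + 1) \<le> real p * L / fact (p + 1)"
          using p1 Lpos by (intro divide_right_mono) auto
        then show ?thesis using nT0 by (rule mult_right_mono)
      qed
      have c2: "L / fact (p + 1) * ny + real p * L / fact (p + 1) * ny = L / fact p * ny"
      proof -
        have "L / fact (p + 1) + real p * L / fact (p + 1) = (real p + 1) * L / fact (p + 1)"
          by (simp add: add_divide_distrib[symmetric] algebra_simps)
        also have "\<dots> = L / fact p" unfolding fp using fpos by simp
        finally have eq: "L / fact (p + 1) + real p * L / fact (p + 1) = L / fact p" .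
        show ?thesis using eq by (metis distrib_right)
      qed
      have a1: "f T - taylor_poly p f Df (x k) T \<le> L / fact (p + 1) * nT"
        using abs_le_D1[OF t1] unfolding nT_def .
      have a2: "- (f y - taylor_poly p f Df (x k) y) \<le> L / fact (p + 1) * ny"
        using abs_le_D2[OF t2] unfolding ny_def .
      have FT: "Fr T = f T + hr T" by (simp add: Fr_def)
      have Fy: "Fr y = f y + hr y" by (simp add: Fr_def)
      have AT: "A T = taylor_poly p f Df (x k) T + real p * L / fact (p + 1) * nT" by (simp add: A_def nT_def)
      have Ay: "A y = taylor_poly p f Df (x k) y + real p * L / fact (p + 1) * ny" by (simp add: A_def ny_def)
      have "Fr T \<le> Fr y + L / fact p * ny"
        using a1 a2 FT Fy AT Ay Ale c1 c2 by linarith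
      then show ?thesis unfolding ny_def .
    qed
    show ?thesis using Td main unfolding T_def by blast
  qed
  have dm: "x k \<in> dom_fun h \<and> Fr (x k) \<le> Fr (x 0)" for k
  proof (induction k)
    case 0 then show ?case using x0 by simp
  next
    case (Suc k)
    then have xk: "x k \<in> dom_fun h" and le: "Fr (x k) \<le> Fr (x 0)" by auto
    have K: "x (Suc k) \<in> dom_fun h \<and> (\<forall>y\<in>dom_fun h. Fr (x (Suc k)) \<le> Fr y + L / fact p * bnorm B (y - x k) ^ (p + 1))"
      by (rule KS[OF xk])
    then have "Fr (x (Suc k)) \<le> Fr (x k) + L / fact p * bnorm B (x k - x k) ^ (p + 1)"
      using xk by blast
    moreover have "L / fact p * bnorm B (x k - x k) ^ (p + 1) = 0" using bn0 by simp
    ultimately have "Fr (x (Suc k)) \<le> Fr (x k)" by linarith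
    then show ?case using K le by simp
  qed
  define S where "S = {y \<in> dom_fun h. ereal (f y) + h y \<le> ereal (f (x 0)) + h (x 0)}"
  define D where "D = (SUP y\<in>S. bnorm B (y - xs))"
  have bddS: "bdd_above ((\<lambda>y. bnorm B (y - xs)) ` S)" using Dbdd unfolding S_def .
  have xkS: "x k \<in> S" for k
    using dm[of k] Feq[of "x k"] Feq[OF x0] unfolding S_def by simp
  have Dk: "bnorm B (x k - xs) \<le> D" for k
    unfolding D_def by (rule cSUP_upper[OF xkS bddS])
  have D0: "0 \<le> D" using Dk[of 0] bnorm_nonneg[OF B, of "x 0 - xs"] by linarith
  define C where "C = L * D ^ (p + 1) / fact p"
  have C0: "0 \<le> C" unfolding C_def using Lpos D0 by simp
  define \<delta> where "\<delta> k = Fr (x k) - Fr xs" for k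
  have rec: "\<delta> (Suc k) \<le> (1 - t) * \<delta> k + C * t ^ (p + 1)" if t: "0 \<le> t" "t \<le> 1" for k t
  proof -
    define y where "y = (1 - t) *\<^sub>R x k + t *\<^sub>R xs"
    have xkd: "x k \<in> dom_fun h" using dm by blast
    have yd: "y \<in> dom_fun h"
      unfolding y_def using convexD_alt[OF dom_convex[OF h] xkd xsd t] .
    have k1: "Fr (x (Suc k)) \<le> Fr y + L / fact p * bnorm B (y - x k) ^ (p + 1)"
      using KS[OF xkd] yd by blast
    have fy: "f y \<le> (1 - t) * f (x k) + t * f xs"
      unfolding y_def using convex_onD[OF fconv t] xkd xsd U(3) by auto
    have "h y \<le> ereal ((1 - t) * hr (x k) + t * hr xs)"
      unfolding y_def hr_def by (rule h_convex[OF h xkd xsd t])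
    then have hy: "hr y \<le> (1 - t) * hr (x k) + t * hr xs" using hfin[OF yd] by simp
    have "y - x k = t *\<^sub>R (xs - x k)" unfolding y_def by (simp add: algebra_simps)
    then have "bnorm B (y - x k) = t * bnorm B (x k - xs)"
      using bnorm_scale[OF B, of t "xs - x k"] bnorm_minus[OF B, of xs "x k"] t by simp
    also have "\<dots> \<le> t * D" using Dk[of k] t by (intro mult_left_mono) auto
    finally have "bnorm B (y - x k) ^ (p + 1) \<le> (t * D) ^ (p + 1)"
      using bnorm_nonneg[OF B] by (intro power_mono) auto
    then have "L / fact p * bnorm B (y - x k) ^ (p + 1) \<le> L / fact p * (t * D) ^ (p + 1)"
      using Lpos by (intro mult_left_mono) auto
    also have "\<dots> = C * t ^ (p + 1)" unfolding C_def by (simp add: power_mult_distrib)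
    finally have "L / fact p * bnorm B (y - x k) ^ (p + 1) \<le> C * t ^ (p + 1)" .
    then show ?thesis using k1 fy hy unfolding \<delta>_def Fr_def by (simp add: algebra_simps)
  qed
  have R: "\<delta> k \<le> (real p + 1) * (2 * real p) ^ p * C / (real k - 1) ^ p" if "k \<ge> 2" for k
    by (rule rate[of p C \<delta>, OF p1 C0 rec that])
  show ?thesis
  proof (intro allI impI)
    fix k :: nat assume k2: "2 \<le> k"
    have lhs: "ereal (f (x k)) + h (x k) - (ereal (f xs) + h xs) = ereal (\<delta> k)"
      using Feq[of "x k"] Feq[OF xsd] dm[of k] unfolding \<delta>_def by simp
    have rhs: "(real p + 1) * (2 * real p) ^ p / fact p * (L * D ^ (p + 1) / (real k - 1) ^ p)
        = (real p + 1) * (2 * real p) ^ p * C / (real k - 1) ^ p"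
      unfolding C_def by (simp add: times_divide_eq_left times_divide_eq_right mult_ac)
    have fin: "ereal (\<delta> k) \<le> ereal ((real p + 1) * (2 * real p) ^ p / fact p * (L * D ^ (p + 1) / (real k - 1) ^ p))"
      unfolding rhs ereal_less_eq(3) by (rule R[OF k2])
    show "ereal (f (x k)) + h (x k) - (ereal (f xs) + h xs) \<le>
           ereal ((real p + 1) * (2 * real p) ^ p / fact p *
             (L * (SUP y\<in>{y \<in> dom_fun h. ereal (f y) + h y \<le> ereal (f (x 0)) + h (x 0)}.
                     bnorm B (y - xs)) ^ (p + 1) / (real k - 1) ^ p))"
      using fin unfolding lhs D_def S_def .
  qed
qed


end
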